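(* Let $q\ge1$, $\theta\in\mathbb R$, $n\in\{1,\dots,N\}$, and define on $I_n=(t_{n-1},t_n)$ the linear function $\varphi_n(t)=\theta-\lambda_n(t-t_{n-1})$ with $\lambda_n=\zeta_q/\tau_n$ and $\zeta_q=\frac{1}{4(2q+1)}$. Then for every $w\in\mathcal W_{h,\tau}^{p,q-1}$ and every $K\in\mathcal T_h$, $$\|(\mathrm{Id}-\Pi_{q-1}^t)(\varphi_nw)\|_{L^2(K\times I_n)}\le\zeta_q\|w\|_{L^2(K\times I_n)},$$ $$\|(\mathrm{Id}-\Pi_{q-1}^t)(\varphi_nw)(\cdot,t_{n-1}^+)\|_{L^2(\Omega)}\le\frac{1}{4\sqrt{2q+1}\sqrt{\tau_n}}\|w\|_{L^2(\Omega\times I_n)}=\frac{\sqrt{\lambda_n}}{2}\|w\|_{L^2(\Omega\times I_n)}.$$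
   Context: $\Omega\subset\mathbb R^d$ bounded polytopic; $\mathcal T_h$ a simplicial mesh of $\Omega$; $0=t_0<\dots<t_N=T$ a partition of $(0,T)$ with $I_n=(t_{n-1},t_n)$, $\tau_n=t_n-t_{n-1}$. $\mathcal V_h^p=\{v\in H^1_0(\Omega):v|_K\in\mathbb P^p(K)\ \forall K\}$ and $\mathcal W_{h,\tau}^{p,q-1}=\{w\in L^2(0,T;H^1_0(\Omega)):w|_{\Omega\times I_n}\in\mathbb P^{q-1}(I_n;\mathcal V_h^p)\ \forall n\}$. $\Pi_{q-1}^t$ denotes the $L^2$-orthogonal projection (in time) onto polynomials of degree at most $q-1$ on each interval $I_n$, applied pointwise in space; here it is applied to $\varphi_n w$ restricted to $\Omega\times I_n$. *)

theory Defs
  imports "HOL-Analysis.Analysis" "HOL-Computational_Algebra.Polynomial"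
begin

definition mpoly_fun :: "nat \<Rightarrow> (real^'d \<Rightarrow> real) \<Rightarrow> bool" where
  "mpoly_fun p f \<longleftrightarrow> (\<exists>c :: ('d \<Rightarrow> nat) \<Rightarrow> real.
      \<forall>x. f x = (\<Sum>\<alpha>\<in>{\<alpha>. sum \<alpha> UNIV \<le> p}. c \<alpha> * (\<Prod>i\<in>UNIV. (x $ i) ^ (\<alpha> i))))"

definition simplicial_mesh :: "(real^'d) set \<Rightarrow> (real^'d) set set \<Rightarrow> bool" where
  "simplicial_mesh \<Omega> Th \<longleftrightarrow> open \<Omega> \<and> bounded \<Omega> \<and> finite Th \<and>
     (\<forall>K\<in>Th. int CARD('d) simplex K) \<and> \<Union>Th = closure \<Omega> \<and>
     (\<forall>K\<in>Th. \<forall>K'\<in>Th. K \<noteq> K' \<longrightarrow>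
        interior K \<inter> interior K' = {} \<and> (K \<inter> K') face_of K \<and> (K \<inter> K') face_of K')"

text \<open>The Lagrange space V_h^p: H^1_0 functions that are piecewise P^p on the mesh;
  for piecewise polynomials on a conforming mesh, membership in H^1_0 means
  continuity on the closure and vanishing on the boundary.\<close>
definition Vh :: "(real^'d) set \<Rightarrow> (real^'d) set set \<Rightarrow> nat \<Rightarrow> (real^'d \<Rightarrow> real) set" where
  "Vh \<Omega> Th p = {v. continuous_on (closure \<Omega>) v \<and> (\<forall>x\<in>frontier \<Omega>. v x = 0) \<and>
      (\<forall>K\<in>Th. \<exists>f. mpoly_fun p f \<and> (\<forall>x\<in>K. v x = f x))}"

definition Wh :: "(real^'d) set \<Rightarrow> (real^'d) set set \<Rightarrow> nat \<Rightarrow> nat \<Rightarrow> (nat \<Rightarrow> real) \<Rightarrow> nat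
    \<Rightarrow> (real^'d \<Rightarrow> real \<Rightarrow> real) set" where
  "Wh \<Omega> Th p q t N = {w. \<forall>m\<in>{1..N}. \<exists>V :: nat \<Rightarrow> real^'d \<Rightarrow> real.
      (\<forall>j<q. V j \<in> Vh \<Omega> Th p) \<and>
      (\<forall>x. \<forall>s\<in>{t (m - 1)<..<t m}. w x s = (\<Sum>j<q. V j x * s ^ j))}"

definition proj_t :: "real \<Rightarrow> real \<Rightarrow> nat \<Rightarrow> (real \<Rightarrow> real) \<Rightarrow> real poly" where
  "proj_t a b q g = (THE P. degree P \<le> q - 1 \<and>
      (\<forall>j\<le>q - 1. integral {a<..<b} (\<lambda>s. (g s - poly P s) * s ^ j) = 0))"

end

theory Submission
  imports Defs
begin


locale ival = fixes a b :: real assumes ab: "a < b"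
begin

definition Ip :: "real poly \<Rightarrow> real" where "Ip p = integral {a..b} (poly p)"

lemma poly_integrable: "poly p integrable_on {a..b}"
  by (intro integrable_continuous_real continuous_intros)

lemma Ip_has: "(poly p has_integral Ip p) {a..b}"
  unfolding Ip_def using poly_integrable by blast

lemma Ip_add: "Ip (p + q) = Ip p + Ip q"
proof -
  have e: "poly (p + q) = (\<lambda>x. poly p x + poly q x)" by (rule ext) simp
  show ?thesis unfolding Ip_def e by (simp add: integral_add poly_integrable)
qed

lemma Ip_diff: "Ip (p - q) = Ip p - Ip q"
proof -
  have e: "poly (p - q) = (\<lambda>x. poly p x - poly q x)" by (rule ext) simp
  show ?thesis unfolding Ip_def e by (simp add: integral_diff poly_integrable)
qed

lemma Ip_smult: "Ip (smult c p) = c * Ip p"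
proof -
  have e: "poly (smult c p) = (\<lambda>x. c * poly p x)" by (rule ext) simp
  show ?thesis unfolding Ip_def e by simp
qed

lemma Ip_0: "Ip 0 = 0"
proof -
  have e: "poly 0 = (\<lambda>x::real. 0)" by (rule ext) simp
  show ?thesis unfolding Ip_def e by simp
qed

lemma Ip_sum: "Ip (\<Sum>i\<in>A. f i) = (\<Sum>i\<in>A. Ip (f i))"
  by (induction A rule: infinite_finite_induct) (auto simp: Ip_0 Ip_add)

lemma Ip_pderiv: "Ip (pderiv p) = poly p b - poly p a"
proof -
  have "(poly (pderiv p) has_integral (poly p b - poly p a)) {a..b}"
    apply (rule fundamental_theorem_of_calculus)
    using ab apply simp
    by (metis has_real_derivative_iff_has_vector_derivative has_field_derivative_at_within poly_DERIV)
  then show ?thesis using Ip_has by (metis has_integral_unique)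
qed

lemma Ip_mono: "(\<And>x. x \<in> {a..b} \<Longrightarrow> poly p x \<le> poly q x) \<Longrightarrow> Ip p \<le> Ip q"
  unfolding Ip_def by (intro integral_le poly_integrable) auto

lemma Ip_sq_nonneg: "0 \<le> Ip (p * p)"
  unfolding Ip_def by (intro integral_nonneg poly_integrable) auto

lemma Ip_sq_pos: assumes "p \<noteq> 0" shows "0 < Ip (p * p)"
proof (rule ccontr)
  assume "\<not> 0 < Ip (p * p)"
  then have z: "integral {a..b} (poly (p*p)) = 0" using Ip_sq_nonneg[of p] unfolding Ip_def by linarith
  have "\<forall>x\<in>{a..b}. poly (p*p) x = 0"
    using z by (subst (asm) integral_eq_0_iff) (auto intro!: continuous_intros simp: ab)
  then have "{a..b} \<subseteq> {x. poly p x = 0}" by auto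
  moreover have "finite {x. poly p x = 0}" using assms by (rule poly_roots_finite)
  moreover have "infinite {a..b}" using ab by simp
  ultimately show False using finite_subset by blast
qed

definition deg_lt :: "nat \<Rightarrow> real poly \<Rightarrow> bool" where
  "deg_lt k P \<longleftrightarrow> (\<forall>i\<ge>k. coeff P i = 0)"

definition orth :: "nat \<Rightarrow> real poly \<Rightarrow> bool" where
  "orth k R \<longleftrightarrow> (\<forall>j<k. Ip (R * monom 1 j) = 0)"

lemma deg_lt_0: "deg_lt k 0" by (simp add: deg_lt_def)
lemma deg_lt_add: "deg_lt k P \<Longrightarrow> deg_lt k Q \<Longrightarrow> deg_lt k (P + Q)" by (simp add: deg_lt_def)
lemma deg_lt_diff: "deg_lt k P \<Longrightarrow> deg_lt k Q \<Longrightarrow> deg_lt k (P - Q)" by (simp add: deg_lt_def)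
lemma deg_lt_smult: "deg_lt k P \<Longrightarrow> deg_lt k (smult c P)" by (simp add: deg_lt_def)
lemma deg_lt_sum: "(\<And>i. i \<in> A \<Longrightarrow> deg_lt k (f i)) \<Longrightarrow> deg_lt k (\<Sum>i\<in>A. f i)"
  by (induction A rule: infinite_finite_induct) (auto simp: deg_lt_0 deg_lt_add)
lemma deg_lt_mono: "deg_lt k P \<Longrightarrow> k \<le> l \<Longrightarrow> deg_lt l P" by (simp add: deg_lt_def)
lemma deg_lt_iff: "k \<ge> 1 \<Longrightarrow> deg_lt k P \<longleftrightarrow> degree P \<le> k - 1"
proof
  assume "k \<ge> 1" "deg_lt k P"
  show "degree P \<le> k - 1"
  proof (rule ccontr)
    assume "\<not> degree P \<le> k - 1"
    then have "degree P \<ge> k" using \<open>k \<ge> 1\<close> by simp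
    then have "coeff P (degree P) = 0" using \<open>deg_lt k P\<close> unfolding deg_lt_def by blast
    then have "P = 0" by simp
    then show False using \<open>degree P \<ge> k\<close> \<open>k \<ge> 1\<close> by simp
  qed
next
  assume "k \<ge> 1" "degree P \<le> k - 1"
  then show "deg_lt k P" unfolding deg_lt_def
    by (auto intro!: coeff_eq_0)
qed
lemma deg_lt_monom: "j < k \<Longrightarrow> deg_lt k (monom c j)" by (simp add: deg_lt_def coeff_monom)

lemma orth_add: "orth k P \<Longrightarrow> orth k Q \<Longrightarrow> orth k (P + Q)" by (simp add: orth_def distrib_right Ip_add)
lemma orth_diff: "orth k P \<Longrightarrow> orth k Q \<Longrightarrow> orth k (P - Q)" by (simp add: orth_def left_diff_distrib Ip_diff)
lemma orth_smult: "orth k P \<Longrightarrow> orth k (smult c P)" by (simp add: orth_def Ip_smult)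
lemma orth_0: "orth k 0" by (simp add: orth_def Ip_0)
lemma orth_sum: "(\<And>i. i \<in> A \<Longrightarrow> orth k (f i)) \<Longrightarrow> orth k (\<Sum>i\<in>A. f i)"
  by (induction A rule: infinite_finite_induct) (auto simp: orth_0 orth_add)

lemma orth_poly: assumes "orth k R" "deg_lt k P" shows "Ip (R * P) = 0"
proof (cases "k = 0")
  case True
  then have "P = 0" using assms(2) by (auto simp: deg_lt_def poly_eq_iff)
  then show ?thesis by (simp add: Ip_0)
next
  case False
  then have d: "degree P \<le> k - 1" using assms(2) deg_lt_iff by auto
  have "P = (\<Sum>i\<le>k - 1. monom (coeff P i) i)" using poly_as_sum_of_monoms'[OF d] by simp
  also have "\<dots> = (\<Sum>i\<le>k - 1. smult (coeff P i) (monom 1 i))" by (simp add: smult_monom)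
  finally have "R * P = R * (\<Sum>i\<le>k - 1. smult (coeff P i) (monom 1 i))" by simp
  also have "\<dots> = (\<Sum>i\<le>k - 1. smult (coeff P i) (R * monom 1 i))"
    by (simp add: sum_distrib_left mult_smult_right)
  finally have "R * P = (\<Sum>i\<le>k - 1. smult (coeff P i) (R * monom 1 i))" .
  then have "Ip (R * P) = (\<Sum>i\<le>k - 1. coeff P i * Ip (R * monom 1 i))" by (simp add: Ip_sum Ip_smult)
  also have "\<dots> = 0" using assms(1) False by (auto simp: orth_def intro!: sum.neutral)
  finally show ?thesis .
qed

lemma proj_exists: "\<exists>P. deg_lt k P \<and> orth k (F - P)"
proof (induction k arbitrary: F)
  case 0
  then show ?case by (auto simp: deg_lt_def orth_def intro: exI[of _ 0])
next
  case (Suc k)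
  obtain PF where PF: "deg_lt k PF" "orth k (F - PF)" using Suc by blast
  obtain Pk where Pk: "deg_lt k Pk" "orth k (monom 1 k - Pk)" using Suc by blast
  define Q where "Q = monom 1 k - Pk"
  have "Q \<noteq> 0"
  proof
    assume "Q = 0"
    then have "coeff Q k = 0" by simp
    moreover have "coeff Q k = 1" using Pk(1) by (simp add: Q_def deg_lt_def)
    ultimately show False by simp
  qed
  then have pos: "0 < Ip (Q * Q)" by (rule Ip_sq_pos)
  have "Ip (Q * Q) = Ip (Q * monom 1 k) - Ip (Q * Pk)"
    by (simp add: Q_def[of] right_diff_distrib Ip_diff[symmetric])
  also have "Ip (Q * Pk) = 0" using orth_poly[OF Pk(2)[folded Q_def] Pk(1)] .
  finally have Qk: "Ip (Q * monom 1 k) > 0" using pos by simp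
  define c where "c = Ip ((F - PF) * monom 1 k) / Ip (Q * monom 1 k)"
  define P where "P = PF + smult c Q"
  have "deg_lt (Suc k) P"
    unfolding P_def Q_def
    by (intro deg_lt_add deg_lt_smult deg_lt_diff deg_lt_monom) (use PF Pk in \<open>auto intro: deg_lt_mono\<close>)
  moreover have "orth (Suc k) (F - P)"
    unfolding orth_def
  proof (intro allI impI)
    fix j assume "j < Suc k"
    have e: "(F - P) * monom 1 j = (F - PF) * monom 1 j - smult c (Q * monom 1 j)"
      by (simp add: P_def algebra_simps)
    show "Ip ((F - P) * monom 1 j) = 0"
    proof (cases "j < k")
      case True
      then show ?thesis using PF(2) Pk(2) by (simp add: e Ip_diff Ip_smult orth_def Q_def)
    next
      case False
      then have "j = k" using \<open>j < Suc k\<close> by simp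
      show ?thesis unfolding e using Qk \<open>j = k\<close> by (simp add: Ip_diff Ip_smult c_def)
    qed
  qed
  ultimately show ?case by blast
qed

lemma proj_unique: assumes "deg_lt k P1" "orth k (F - P1)" "deg_lt k P2" "orth k (F - P2)"
  shows "P1 = P2"
proof (rule ccontr)
  assume "P1 \<noteq> P2"
  then have "0 < Ip ((P1 - P2) * (P1 - P2))" by (intro Ip_sq_pos) simp
  moreover have "orth k (P1 - P2)"
  proof -
    have "orth k ((F - P2) - (F - P1))" by (rule orth_diff[OF assms(4) assms(2)])
    then show ?thesis by simp
  qed
  then have "Ip ((P1 - P2) * (P1 - P2)) = 0" using assms by (intro orth_poly deg_lt_diff)
  ultimately show False by simp
qed

lemma best_approx: assumes "orth k (F - P)" "deg_lt k P" "deg_lt k H"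
  shows "Ip ((F - P) * (F - P)) \<le> Ip ((F - H) * (F - H))"
proof -
  define R where "R = F - P"
  define E where "E = P - H"
  have "F - H = R + E" by (simp add: R_def E_def)
  then have eq: "(F - H) * (F - H) = R * R + (R * E + R * E) + E * E"
    by (simp add: algebra_simps)
  have "Ip ((F - H) * (F - H)) = Ip (R * R) + 2 * Ip (R * E) + Ip (E * E)"
    unfolding eq by (simp only: Ip_add)
  moreover have "Ip (R * E) = 0" unfolding R_def E_def using assms by (intro orth_poly deg_lt_diff)
  moreover have "0 \<le> Ip (E * E)" by (rule Ip_sq_nonneg)
  ultimately show ?thesis by (simp add: R_def)
qed

lemma endpoint_identity: assumes "orth q R" "deg_lt (Suc q) R"
  shows "(b - a) * (poly R a)^2 = (2 * real q + 1) * Ip (R * R)"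
proof -
  define D where "D = [:-b, 1:]"
  define T where "T = D * pderiv R - smult (real q) R"
  have DX: "D * X = smult (-b) X + pCons 0 X" for X by (simp add: D_def)
  have "deg_lt q T" unfolding deg_lt_def
  proof (intro allI impI)
    fix i assume "q \<le> i"
    have c0: "coeff R j = 0" if "j > q" for j using assms(2) that by (simp add: deg_lt_def)
    have "coeff T i = - b * (real (Suc i) * coeff R (Suc i)) + coeff (pCons 0 (pderiv R)) i - real q * coeff R i"
      by (simp add: T_def DX coeff_pderiv)
    also have "coeff R (Suc i) = 0" using c0 \<open>q \<le> i\<close> by simp
    also have "coeff (pCons 0 (pderiv R)) i = real q * coeff R i"
    proof (cases i)
      case 0
      then show ?thesis using \<open>q \<le> i\<close> by simp
    next
      case (Suc i')
      then have "coeff (pCons 0 (pderiv R)) i = real i * coeff R i" by (simp add: coeff_pderiv)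
      moreover have "real i * coeff R i = real q * coeff R i"
        using c0[of i] \<open>q \<le> i\<close> by (cases "i = q") auto
      ultimately show ?thesis by simp
    qed
    finally show "coeff T i = 0" by simp
  qed
  then have T0: "Ip (R * T) = 0" by (rule orth_poly[OF assms(1)])
  have pd: "pderiv (D * (R * R)) = R * R + (R * T + R * T) + (smult (real q) (R * R) + smult (real q) (R * R))"
  proof -
    have "pderiv D = 1" by (simp add: D_def pderiv_pCons)
    then have "pderiv (D * (R * R)) = R * R + (R * (D * pderiv R) + R * (D * pderiv R))"
      by (simp add: pderiv_mult algebra_simps)
    also have "D * pderiv R = T + smult (real q) R" by (simp add: T_def)
    finally show ?thesis by (simp add: algebra_simps)
  qed
  have "Ip (pderiv (D * (R * R))) = (b - a) * (poly R a)^2"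
    by (simp add: Ip_pderiv D_def power2_eq_square algebra_simps)
  moreover have "Ip (pderiv (D * (R * R))) = (2 * real q + 1) * Ip (R * R)"
    unfolding pd Ip_add Ip_smult T0 by (simp add: algebra_simps)
  ultimately show ?thesis by simp
qed

lemma core_bound: assumes "deg_lt q g" "orth q (Phi * g - P)" "deg_lt q P"
    and Phi: "Phi = [:th + lam * a, - lam:]"
  shows "Ip ((Phi * g - P) * (Phi * g - P)) \<le> (lam * (b - a))^2 / 4 * Ip (g * g)"
proof -
  define m where "m = (a + b) / 2"
  define H where "H = smult (th - lam * (m - a)) g"
  have "deg_lt q H" unfolding H_def using assms(1) by (rule deg_lt_smult)
  then have "Ip ((Phi * g - P) * (Phi * g - P)) \<le> Ip ((Phi * g - H) * (Phi * g - H))"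
    using assms by (intro best_approx)
  also have "Phi * g - H = smult (- lam) ([:-m, 1:] * g)"
    by (simp add: poly_eq_poly_eq_iff[symmetric] fun_eq_iff Phi H_def algebra_simps)
  also have "Ip (smult (- lam) ([:-m, 1:] * g) * smult (- lam) ([:-m, 1:] * g))
      = lam^2 * Ip (([:-m, 1:] * g) * ([:-m, 1:] * g))"
    by (simp add: Ip_smult power2_eq_square mult_smult_left mult_smult_right)
  also have "Ip (([:-m, 1:] * g) * ([:-m, 1:] * g)) \<le> Ip (smult ((b - a)^2 / 4) (g * g))"
  proof (rule Ip_mono)
    fix x assume x: "x \<in> {a..b}"
    have "\<bar>x - m\<bar> \<le> (b - a) / 2" using x by (auto simp: m_def abs_if field_simps)
    then have "(x - m)^2 \<le> ((b - a) / 2)^2"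
      using x ab by (intro power2_le_iff_abs_le[THEN iffD2]) auto
    then have "(x - m)^2 * (poly g x)^2 \<le> ((b - a) / 2)^2 * (poly g x)^2"
      by (intro mult_right_mono) auto
    then show "poly (([:-m, 1:] * g) * ([:-m, 1:] * g)) x \<le> poly (smult ((b - a)^2 / 4) (g * g)) x"
      by (simp add: power2_eq_square algebra_simps)
  qed
  finally show ?thesis using ab by (simp add: Ip_smult power_mult_distrib mult_left_mono)
qed

end


lemma integrable_from_compact:
  fixes f psi :: "'a::euclidean_space \<Rightarrow> real"
  assumes "compact C" "continuous_on C psi" "S \<subseteq> C" "S \<in> sets borel" "\<And>z. z \<in> S \<Longrightarrow> f z = psi z"
  shows "f integrable_on S"
proof -
  have "integrable lborel (\<lambda>x. indicator C x *\<^sub>R psi x)"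
    using assms(1,2) by (rule borel_integrable_compact)
  then have "integrable lborel (\<lambda>x. indicator S x *\<^sub>R (indicator C x *\<^sub>R psi x))"
    using integrable_mult_indicator[of S lborel "\<lambda>x. indicator C x *\<^sub>R psi x"] assms(4) by simp
  also have "(\<lambda>x. indicator S x *\<^sub>R (indicator C x *\<^sub>R psi x)) = (\<lambda>x. if x \<in> S then psi x else 0)"
    using assms(3) by (auto simp: indicator_def fun_eq_iff)
  finally have "(\<lambda>x. if x \<in> S then psi x else 0) integrable_on UNIV"
    by (rule integrable_on_lborel)
  then have "psi integrable_on S" by (simp add: integrable_restrict_UNIV)
  then show ?thesis using assms(5) by (metis integrable_eq)
qed

lemma tonelli_slices:
  fixes h :: "'a::euclidean_space \<times> real \<Rightarrow> real"
  assumes K: "K \<in> sets borel" and hm: "h \<in> borel_measurable borel" and hpos: "\<And>z. 0 \<le> h z"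
    and hc: "\<And>x. x \<in> K \<Longrightarrow> continuous_on {a..b} (\<lambda>s. h (x, s))"
  shows "(\<integral>\<^sup>+z. ennreal (h z) * indicator (K \<times> {a<..<b}) z \<partial>lborel)
       = (\<integral>\<^sup>+x. indicator K x * ennreal (integral {a<..<b} (\<lambda>s. h (x, s))) \<partial>lborel)"
proof -
  let ?f = "\<lambda>z. ennreal (h z) * indicator (K \<times> {a<..<b}) z"
  have meas: "?f \<in> borel_measurable (lborel \<Otimes>\<^sub>M lborel)"
  proof -
    have i1: "(\<lambda>z. indicator K (fst z) :: real) \<in> borel_measurable borel"
      by (rule measurable_compose[OF _ borel_measurable_indicator[OF K]])
         (intro borel_measurable_continuous_onI continuous_intros)
    have i2: "(\<lambda>z. indicator {a<..<b} (snd z) :: real) \<in> borel_measurable borel"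
      by (rule measurable_compose[OF _ borel_measurable_indicator]) 
         (auto intro!: borel_measurable_continuous_onI continuous_intros)
    have "(\<lambda>z. ennreal (h z * (indicator K (fst z) * indicator {a<..<b} (snd z)))) \<in> borel_measurable borel"
      using i1 i2 hm by measurable
    also have "(\<lambda>z. ennreal (h z * (indicator K (fst z) * indicator {a<..<b} (snd z)))) = ?f"
      by (auto simp: fun_eq_iff indicator_def)
    finally have "?f \<in> borel_measurable borel" .
    then show ?thesis by (simp only: lborel_prod measurable_lborel2)
  qed
  have "(\<integral>\<^sup>+z. ?f z \<partial>lborel) = integral\<^sup>N (lborel \<Otimes>\<^sub>M lborel) ?f"
    by (simp only: lborel_prod)
  also have "\<dots> = (\<integral>\<^sup>+x. \<integral>\<^sup>+s. ?f (x, s) \<partial>lborel \<partial>lborel)"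
    using lborel.nn_integral_fst[OF meas] by simp
  also have "\<dots> = (\<integral>\<^sup>+x. indicator K x * ennreal (integral {a<..<b} (\<lambda>s. h (x, s))) \<partial>lborel)"
  proof (rule nn_integral_cong)
    fix x :: 'a
    show "(\<integral>\<^sup>+s. ?f (x, s) \<partial>lborel) = indicator K x * ennreal (integral {a<..<b} (\<lambda>s. h (x, s)))"
    proof (cases "x \<in> K")
      case False
      then show ?thesis by (simp add: indicator_def)
    next
      case True
      have "(\<lambda>s. h (x, s)) integrable_on {a<..<b}"
        using hc[OF True] by (simp add: integrable_on_open_interval_real integrable_continuous_real)
      then have hi: "((\<lambda>s. h (x, s)) has_integral integral {a<..<b} (\<lambda>s. h (x, s))) {a<..<b}"
        by blast
      have "(\<integral>\<^sup>+s. ?f (x, s) \<partial>lborel) = (\<integral>\<^sup>+s. ennreal (h (x, s)) * indicator {a<..<b} s \<partial>lborel)"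
        using True by (intro nn_integral_cong) (simp add: indicator_def)
      also have "\<dots> = ennreal (integral {a<..<b} (\<lambda>s. h (x, s)))"
        using hi hpos by (intro nn_integral_has_integral_lebesgue') auto
      finally show ?thesis using True by simp
    qed
  qed
  finally show ?thesis .
qed



context ival
begin

lemma integral_Ioo_poly:
  assumes "\<And>s. s \<in> {a<..<b} \<Longrightarrow> f s = poly F s"
  shows "integral {a<..<b} f = Ip F"
proof -
  have "integral {a<..<b} f = integral {a<..<b} (poly F)"
    using assms by (intro integral_cong) auto
  also have "\<dots> = Ip F" unfolding Ip_def by (simp add: integral_open_interval_real)
  finally show ?thesis .
qed

lemma proj_t_eq:
  assumes q: "q \<ge> 1" and f: "\<And>s. s \<in> {a<..<b} \<Longrightarrow> f s = poly F s"
    and P: "deg_lt q P" "orth q (F - P)"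
  shows "proj_t a b q f = P"
proof -
  have key: "integral {a<..<b} (\<lambda>s. (f s - poly P' s) * s ^ j) = Ip ((F - P') * monom 1 j)" for P' j
    using f by (intro integral_Ioo_poly) (simp add: poly_monom)
  show ?thesis
    unfolding proj_t_def
  proof (rule the_equality)
    show "degree P \<le> q - 1 \<and> (\<forall>j\<le>q - 1. integral {a<..<b} (\<lambda>s. (f s - poly P s) * s ^ j) = 0)"
      using P q by (auto simp: key deg_lt_iff orth_def)
  next
    fix P' assume "degree P' \<le> q - 1 \<and> (\<forall>j\<le>q - 1. integral {a<..<b} (\<lambda>s. (f s - poly P' s) * s ^ j) = 0)"
    then have "deg_lt q P'" "orth q (F - P')" using q by (auto simp: key deg_lt_iff orth_def)
    then show "P' = P" using P by (intro proj_unique)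
  qed
qed

end

lemma ind_cong:
  assumes "\<And>x s. x \<in> K \<Longrightarrow> s \<in> I \<Longrightarrow> f (x, s) = g (x, s)"
  shows "ennreal (f z) * indicator (K \<times> I) z = ennreal (g z) * indicator (K \<times> I) z"
  using assms by (cases z) (auto simp: indicator_def)

lemma int_nonneg: "(\<And>x. x \<in> S \<Longrightarrow> 0 \<le> f x) \<Longrightarrow> 0 \<le> integral S (f :: 'a::euclidean_space \<Rightarrow> real)"
  by (cases "f integrable_on S") (auto intro: integral_nonneg simp: not_integrable_integral)

lemma mpoly_cont: assumes "mpoly_fun p f" shows "continuous_on UNIV f"
proof -
  obtain c where c: "\<And>x. f x = (\<Sum>\<alpha>\<in>{\<alpha>. sum \<alpha> UNIV \<le> p}. c \<alpha> * (\<Prod>i\<in>UNIV. (x $ i) ^ (\<alpha> i)))"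
    using assms unfolding mpoly_fun_def by blast
  have e: "f = (\<lambda>x. \<Sum>\<alpha>\<in>{\<alpha>. sum \<alpha> UNIV \<le> p}. c \<alpha> * (\<Prod>i\<in>UNIV. (x $ i) ^ (\<alpha> i)))"
    using c by (simp add: fun_eq_iff)
  show ?thesis unfolding e by (intro continuous_intros)
qed



theorem mainTheorem3:
  fixes \<Omega> :: "(real^'d) set" and Th :: "(real^'d) set set"
    and t :: "nat \<Rightarrow> real" and T \<theta> :: real and N n p q :: nat
    and w :: "real^'d \<Rightarrow> real \<Rightarrow> real"
  assumes mesh: "simplicial_mesh \<Omega> Th"
    and N: "N \<ge> 1" and t0: "t 0 = 0" and tN: "t N = T"
    and tmono: "\<And>m. m < N \<Longrightarrow> t m < t (Suc m)"
    and q: "q \<ge> 1" and n: "n \<in> {1..N}"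
    and w: "w \<in> Wh \<Omega> Th p q t N"
  defines "\<phi> \<equiv> (\<lambda>s. \<theta> - ((1 / (4 * (2 * real q + 1))) / (t n - t (n - 1))) * (s - t (n - 1)))"
  defines "r \<equiv> (\<lambda>x s. \<phi> s * w x s - poly (proj_t (t (n - 1)) (t n) q (\<lambda>s'. \<phi> s' * w x s')) s)"
  shows "(\<forall>K\<in>Th.
           sqrt (integral (K \<times> {t (n - 1)<..<t n}) (\<lambda>(x, s). (r x s)\<^sup>2))
             \<le> (1 / (4 * (2 * real q + 1))) * sqrt (integral (K \<times> {t (n - 1)<..<t n}) (\<lambda>(x, s). (w x s)\<^sup>2)))
       \<and> sqrt (integral \<Omega> (\<lambda>x. (Lim (at_right (t (n - 1))) (r x))\<^sup>2))
             \<le> 1 / (4 * sqrt (2 * real q + 1) * sqrt (t n - t (n - 1)))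
                 * sqrt (integral (\<Omega> \<times> {t (n - 1)<..<t n}) (\<lambda>(x, s). (w x s)\<^sup>2))
       \<and> 1 / (4 * sqrt (2 * real q + 1) * sqrt (t n - t (n - 1)))
                 * sqrt (integral (\<Omega> \<times> {t (n - 1)<..<t n}) (\<lambda>(x, s). (w x s)\<^sup>2))
           = sqrt ((1 / (4 * (2 * real q + 1))) / (t n - t (n - 1))) / 2 * sqrt (integral (\<Omega> \<times> {t (n - 1)<..<t n}) (\<lambda>(x, s). (w x s)\<^sup>2))"
proof -
  define a where "a = t (n - 1)"
  define b where "b = t n"
  have ab: "a < b" using tmono[of "n - 1"] n by (auto simp: a_def b_def)
  interpret I: ival a b by unfold_locales (rule ab)
  define tau where "tau = b - a"
  have tau: "tau > 0" using ab by (simp add: tau_def)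
  define zeta where "zeta = 1 / (4 * (2 * real q + 1))"
  have zeta: "zeta > 0" by (simp add: zeta_def)
  define lam where "lam = zeta / tau"
  define Cc where "Cc = (1 / (4 * sqrt (2 * real q + 1) * sqrt tau))^2"
  have Cc: "Cc = 1 / (16 * (2 * real q + 1) * tau)"
    using tau by (simp add: Cc_def power_mult_distrib power_divide)
  have lamtau: "lam * tau = zeta" using tau by (simp add: lam_def)
  define Phi where "Phi = [:\<theta> + lam * a, - lam:]"
  have phi: "\<phi> s = poly Phi s" for s
  proof -
    have "\<phi> s = \<theta> - lam * (s - a)" by (simp add: \<phi>_def lam_def zeta_def tau_def a_def b_def)
    then show ?thesis by (simp add: Phi_def algebra_simps)
  qed
  obtain V where V: "\<And>j. j < q \<Longrightarrow> V j \<in> Vh \<Omega> Th p"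
    and wV: "\<And>x s. s \<in> {a<..<b} \<Longrightarrow> w x s = (\<Sum>j<q. V j x * s ^ j)"
    using w n unfolding Wh_def a_def b_def by fastforce
  define g where "g x = (\<Sum>j<q. monom (V j x) j)" for x
  have g_poly: "poly (g x) s = (\<Sum>j<q. V j x * s ^ j)" for x s
    by (simp add: g_def poly_sum poly_monom)
  have g_deg: "I.deg_lt q (g x)" for x
    unfolding g_def by (intro I.deg_lt_sum I.deg_lt_monom) auto
  define Pj where "Pj j = (SOME P. I.deg_lt q P \<and> I.orth q (Phi * monom 1 j - P))" for j
  have Pj: "I.deg_lt q (Pj j) \<and> I.orth q (Phi * monom 1 j - Pj j)" for j
    unfolding Pj_def by (rule someI_ex) (rule I.proj_exists)
  define E where "E j = Phi * monom 1 j - Pj j" for j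
  define RR where "RR x = (\<Sum>j<q. smult (V j x) (E j))" for x
  define PP where "PP x = (\<Sum>j<q. smult (V j x) (Pj j))" for x
  have Phig: "Phi * g x = (\<Sum>j<q. smult (V j x) (Phi * monom 1 j))" for x
    unfolding g_def sum_distrib_left by (simp add: mult_smult_right[symmetric] smult_monom del: mult_smult_right)
  have RRe: "RR x = Phi * g x - PP x" for x
    by (simp add: RR_def PP_def Phig E_def smult_diff_right sum_subtractf)
  have PPdeg: "I.deg_lt q (PP x)" for x
    unfolding PP_def using Pj by (intro I.deg_lt_sum I.deg_lt_smult) auto
  have RRorth: "I.orth q (Phi * g x - PP x)" for x
    unfolding RRe[symmetric] RR_def E_def using Pj by (intro I.orth_sum I.orth_smult) auto
  have proj: "proj_t a b q (\<lambda>s'. \<phi> s' * w x s') = PP x" for x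
    using q PPdeg RRorth by (intro I.proj_t_eq[where F = "Phi * g x"]) (auto simp: phi wV g_poly)
  have r_eq: "r x s = poly (RR x) s" if "s \<in> {a<..<b}" for x s
  proof -
    have "r x s = \<phi> s * w x s - poly (PP x) s"
      unfolding r_def a_def[symmetric] b_def[symmetric] proj ..
    then show ?thesis using that by (simp add: RRe phi wV g_poly)
  qed
  have RRdeg: "I.deg_lt (Suc q) (RR x)" for x
  proof -
    have "degree (Phi * g x) \<le> q"
    proof -
      have "degree (Phi * g x) \<le> degree Phi + degree (g x)" by (rule degree_mult_le)
      moreover have "degree Phi \<le> 1" by (simp add: Phi_def)
      moreover have "degree (g x) \<le> q - 1" using g_deg q I.deg_lt_iff by blast
      ultimately show ?thesis using q by linarith
    qed
    then have "I.deg_lt (Suc q) (Phi * g x)" using I.deg_lt_iff[of "Suc q"] by simp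
    moreover have "I.deg_lt (Suc q) (PP x)" using PPdeg[of x] by (rule I.deg_lt_mono) simp
    ultimately show ?thesis unfolding RRe by (rule I.deg_lt_diff)
  qed
  have c1: "I.Ip (RR x * RR x) \<le> zeta^2 / 4 * I.Ip (g x * g x)" for x
    using I.core_bound[OF g_deg RRorth PPdeg Phi_def] unfolding RRe[symmetric] lamtau[unfolded tau_def] .
  have c2: "(poly (RR x) a)^2 \<le> Cc * I.Ip (g x * g x)" for x
  proof -
    have "tau * (poly (RR x) a)^2 = (2 * real q + 1) * I.Ip (RR x * RR x)"
      unfolding tau_def by (rule I.endpoint_identity[OF RRorth[folded RRe] RRdeg])
    also have "\<dots> \<le> (2 * real q + 1) * (zeta^2 / 4 * I.Ip (g x * g x))"
      by (intro mult_left_mono c1) auto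
    finally have "(poly (RR x) a)^2 \<le> (2 * real q + 1) * (zeta^2 / 4 * I.Ip (g x * g x)) / tau"
      using tau by (simp add: field_simps)
    also have "\<dots> \<le> Cc * I.Ip (g x * g x)"
    proof -
      have G: "0 \<le> I.Ip (g x * g x)" by (rule I.Ip_sq_nonneg)
      have "(2 * real q + 1) * (zeta^2 / 4) / tau = 1 / (64 * (2 * real q + 1) * tau)"
      proof -
        have gen: "u * ((1 / (4 * u))^2 / 4) / tau = 1 / (64 * u * tau)" if "u > 0" for u :: real
          using that tau by (simp add: field_simps power2_eq_square)
        show ?thesis unfolding zeta_def by (rule gen) simp
      qed
      also have "\<dots> \<le> Cc" unfolding Cc using tau by (intro frac_le) auto
      finally have K: "(2 * real q + 1) * (zeta^2 / 4) / tau \<le> Cc" .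
      have "(2 * real q + 1) * (zeta^2 / 4 * I.Ip (g x * g x)) / tau
          = ((2 * real q + 1) * (zeta^2 / 4) / tau) * I.Ip (g x * g x)" by simp
      also have "\<dots> \<le> Cc * I.Ip (g x * g x)" using K G by (rule mult_right_mono)
      finally show ?thesis .
    qed
    finally show ?thesis .
  qed
  have hw0: "(w x s)\<^sup>2 = poly (g x * g x) s" if "s \<in> {a<..<b}" for x s
    using wV[OF that, of x] by (simp add: g_poly power2_eq_square)
  have hw: "integral {a<..<b} (\<lambda>s. (w x s)\<^sup>2) = I.Ip (g x * g x)" for x
    by (rule I.integral_Ioo_poly) (rule hw0)
  have mesh': "open \<Omega>" "bounded \<Omega>" "\<And>K. K \<in> Th \<Longrightarrow> int CARD('d) simplex K"
    using mesh[unfolded simplicial_mesh_def, THEN conjunct1]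
      mesh[unfolded simplicial_mesh_def, THEN conjunct2, THEN conjunct1]
      mesh[unfolded simplicial_mesh_def, THEN conjunct2, THEN conjunct2, THEN conjunct2, THEN conjunct1]
    by auto
  have Ib: "{a<..<b} \<in> sets borel" by simp
  have p1: "\<forall>K\<in>Th. sqrt (integral (K \<times> {a<..<b}) (\<lambda>(x, s). (r x s)\<^sup>2))
             \<le> zeta * sqrt (integral (K \<times> {a<..<b}) (\<lambda>(x, s). (w x s)\<^sup>2))"
  proof
    fix K assume K: "K \<in> Th"
    obtain C where C: "finite C" "K = convex hull C"
      using mesh'(3)[OF K] unfolding simplex by blast
    have Kc: "compact K" using C by (simp add: compact_convex_hull finite_imp_compact)
    have Kb: "K \<in> sets borel" using Kc by (simp add: compact_imp_closed borel_closed)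
    have ex: "\<exists>f. mpoly_fun p f \<and> (\<forall>x\<in>K. V j x = f x)" if "j < q" for j
      by (rule bspec[OF V[OF that, unfolded Vh_def mem_Collect_eq, THEN conjunct2, THEN conjunct2] K])
    have "\<forall>j. \<exists>f. j < q \<longrightarrow> mpoly_fun p f \<and> (\<forall>x\<in>K. V j x = f x)"
      using ex by blast
    then obtain F where F0: "\<forall>j. j < q \<longrightarrow> mpoly_fun p (F j) \<and> (\<forall>x\<in>K. V j x = F j x)"
      by (rule choice[THEN exE])
    then have F: "\<And>j. j < q \<Longrightarrow> mpoly_fun p (F j) \<and> (\<forall>x\<in>K. V j x = F j x)" by blast
    have Fc: "continuous_on UNIV (\<lambda>z. F j (fst z))" if "j < q" for j
      using mpoly_cont[of p "F j"] F[OF that]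
      by (intro continuous_on_compose2[of UNIV "F j" UNIV fst]) (auto intro: continuous_intros)
    define rho where "rho z = (\<Sum>j<q. F j (fst z) * poly (E j) (snd z))" for z :: "(real^'d) \<times> real"
    define om where "om z = (\<Sum>j<q. F j (fst z) * (snd z) ^ j)" for z :: "(real^'d) \<times> real"
    have rhoc: "continuous_on UNIV rho" unfolding rho_def
      by (intro continuous_intros Fc) auto
    have omc: "continuous_on UNIV om" unfolding om_def
      by (intro continuous_intros Fc) auto
    have rhos: "continuous_on UNIV (\<lambda>s. rho (x, s))" for x
      by (rule continuous_on_compose2[OF rhoc]) (auto intro!: continuous_intros)
    have oms: "continuous_on UNIV (\<lambda>s. om (x, s))" for x
      by (rule continuous_on_compose2[OF omc]) (auto intro!: continuous_intros)
    have rho2m: "(\<lambda>z. (rho z)\<^sup>2) \<in> borel_measurable borel"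
      by (rule borel_measurable_continuous_onI) (intro continuous_on_power rhoc)
    have om2m: "(\<lambda>z. zeta\<^sup>2 * (om z)\<^sup>2) \<in> borel_measurable borel"
      by (rule borel_measurable_continuous_onI) (intro continuous_on_mult continuous_on_const continuous_on_power omc)
    have rho2s: "continuous_on {a..b} (\<lambda>s. (rho (x, s))\<^sup>2)" for x
      by (intro continuous_on_power continuous_on_subset[OF rhos]) auto
    have om2s: "continuous_on {a..b} (\<lambda>s. zeta\<^sup>2 * (om (x, s))\<^sup>2)" for x
      by (intro continuous_on_mult continuous_on_const continuous_on_power continuous_on_subset[OF oms]) auto
    have r_rho: "r x s = rho (x, s)" if "x \<in> K" "s \<in> {a<..<b}" for x s
      using that F by (simp add: r_eq RR_def rho_def poly_sum)
    have rho_RR: "rho (x, s) = poly (RR x) s" if "x \<in> K" for x s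
      using that F by (simp add: RR_def rho_def poly_sum)
    have w_om: "w x s = om (x, s)" if "x \<in> K" "s \<in> {a<..<b}" for x s
      using that F by (simp add: wV om_def)
    have om_g: "om (x, s) = poly (g x) s" if "x \<in> K" for x s
      using that F by (simp add: om_def g_poly)
    define S where "S = K \<times> {a<..<b}"
    have Sb: "S \<in> sets borel" unfolding S_def using Kb Ib by (rule borel_Times)
    have Wnn: "0 \<le> integral S (\<lambda>(x, s). (w x s)\<^sup>2)" by (rule int_nonneg) auto
    have wint: "(\<lambda>(x, s). zeta\<^sup>2 * (w x s)\<^sup>2) integrable_on S"
    proof (rule integrable_from_compact[where C = "K \<times> {a..b}" and psi = "\<lambda>z. zeta\<^sup>2 * (om z)\<^sup>2"])
      show "compact (K \<times> {a..b})" using Kc by (intro compact_Times) auto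
      show "continuous_on (K \<times> {a..b}) (\<lambda>z. zeta\<^sup>2 * (om z)\<^sup>2)"
        by (intro continuous_intros continuous_on_subset[OF omc]) auto
      show "S \<subseteq> K \<times> {a..b}" by (auto simp: S_def)
      show "S \<in> sets borel" by (rule Sb)
      show "(case z of (x, s) \<Rightarrow> zeta\<^sup>2 * (w x s)\<^sup>2) = zeta\<^sup>2 * (om z)\<^sup>2" if "z \<in> S" for z
        using that by (auto simp: S_def w_om)
    qed
    have mainS: "sqrt (integral S (\<lambda>(x, s). (r x s)\<^sup>2))
             \<le> zeta * sqrt (integral S (\<lambda>(x, s). (w x s)\<^sup>2))"
    proof (cases "(\<lambda>(x, s). (r x s)\<^sup>2) integrable_on S")
      case False
      then show ?thesis using Wnn zeta by (simp add: not_integrable_integral)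
    next
      case True
      have "ennreal (integral S (\<lambda>(x, s). (r x s)\<^sup>2))
          = (\<integral>\<^sup>+z. ennreal ((\<lambda>(x, s). (r x s)\<^sup>2) z) * indicator S z \<partial>lborel)"
        using True by (intro nn_integral_has_integral_lebesgue'[symmetric]) auto
      also have "\<dots> = (\<integral>\<^sup>+z. ennreal ((rho z)\<^sup>2) * indicator (K \<times> {a<..<b}) z \<partial>lborel)"
      proof (rule nn_integral_cong)
        fix z :: "(real^'d) \<times> real"
        show "ennreal ((\<lambda>(x, s). (r x s)\<^sup>2) z) * indicator S z = ennreal ((rho z)\<^sup>2) * indicator (K \<times> {a<..<b}) z"
          unfolding S_def by (rule ind_cong) (simp add: r_rho)
      qed
      also have "\<dots> = (\<integral>\<^sup>+x. indicator K x * ennreal (integral {a<..<b} (\<lambda>s. (rho (x, s))\<^sup>2)) \<partial>lborel)"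
        using Kb rho2m rho2s by (intro tonelli_slices) auto
      also have "\<dots> \<le> (\<integral>\<^sup>+x. indicator K x * ennreal (integral {a<..<b} (\<lambda>s. zeta\<^sup>2 * (om (x, s))\<^sup>2)) \<partial>lborel)"
      proof (rule nn_integral_mono)
        fix x :: "real^'d"
        show "indicator K x * ennreal (integral {a<..<b} (\<lambda>s. (rho (x, s))\<^sup>2))
            \<le> indicator K x * ennreal (integral {a<..<b} (\<lambda>s. zeta\<^sup>2 * (om (x, s))\<^sup>2))"
        proof (cases "x \<in> K")
          case False then show ?thesis by simp
        next
          case True
          have e1p: "(rho (x, s))\<^sup>2 = poly (RR x * RR x) s" for s
            using rho_RR[OF True, of s] by (simp add: power2_eq_square)
          have e1: "integral {a<..<b} (\<lambda>s. (rho (x, s))\<^sup>2) = I.Ip (RR x * RR x)"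
            by (rule I.integral_Ioo_poly) (rule e1p)
          have e2p: "zeta\<^sup>2 * (om (x, s))\<^sup>2 = poly (smult (zeta\<^sup>2) (g x * g x)) s" for s
            using om_g[OF True, of s] by (simp add: power2_eq_square)
          have e2: "integral {a<..<b} (\<lambda>s. zeta\<^sup>2 * (om (x, s))\<^sup>2) = zeta\<^sup>2 * I.Ip (g x * g x)"
            unfolding I.Ip_smult[symmetric] by (rule I.integral_Ioo_poly) (rule e2p)
          have "I.Ip (RR x * RR x) \<le> zeta\<^sup>2 * I.Ip (g x * g x)"
          proof -
            have G: "0 \<le> I.Ip (g x * g x)" by (rule I.Ip_sq_nonneg)
            have "zeta\<^sup>2 / 4 * I.Ip (g x * g x) \<le> zeta\<^sup>2 * I.Ip (g x * g x)"
              using G by (intro mult_right_mono) auto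
            then show ?thesis using c1[of x] by linarith
          qed
          then show ?thesis unfolding e1 e2 using True by (simp add: ennreal_leI)
        qed
      qed
      also have "\<dots> = (\<integral>\<^sup>+z. ennreal (zeta\<^sup>2 * (om z)\<^sup>2) * indicator (K \<times> {a<..<b}) z \<partial>lborel)"
        using Kb om2m om2s by (intro tonelli_slices[symmetric]) auto
      also have "\<dots> = (\<integral>\<^sup>+z. ennreal ((\<lambda>(x, s). zeta\<^sup>2 * (w x s)\<^sup>2) z) * indicator S z \<partial>lborel)"
      proof (rule nn_integral_cong)
        fix z :: "(real^'d) \<times> real"
        show "ennreal (zeta\<^sup>2 * (om z)\<^sup>2) * indicator (K \<times> {a<..<b}) z = ennreal ((\<lambda>(x, s). zeta\<^sup>2 * (w x s)\<^sup>2) z) * indicator S z"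
          unfolding S_def by (rule ind_cong) (simp add: w_om)
      qed
      also have "\<dots> = ennreal (integral S (\<lambda>(x, s). zeta\<^sup>2 * (w x s)\<^sup>2))"
        using wint by (intro nn_integral_has_integral_lebesgue') auto
      finally have le: "integral S (\<lambda>(x, s). (r x s)\<^sup>2) \<le> integral S (\<lambda>(x, s). zeta\<^sup>2 * (w x s)\<^sup>2)"
        using Wnn zeta by (subst (asm) ennreal_le_iff) (auto intro: int_nonneg)
      have "(\<lambda>(x, s). zeta\<^sup>2 * (w x s)\<^sup>2) = (\<lambda>z. zeta\<^sup>2 * (\<lambda>(x, s). (w x s)\<^sup>2) z)" by auto
      then have "integral S (\<lambda>(x, s). zeta\<^sup>2 * (w x s)\<^sup>2) = zeta\<^sup>2 * integral S (\<lambda>(x, s). (w x s)\<^sup>2)" by simp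
      with le have "sqrt (integral S (\<lambda>(x, s). (r x s)\<^sup>2)) \<le> sqrt (zeta\<^sup>2 * integral S (\<lambda>(x, s). (w x s)\<^sup>2))"
        by simp
      also have "\<dots> = zeta * sqrt (integral S (\<lambda>(x, s). (w x s)\<^sup>2))" using zeta by (simp add: real_sqrt_mult)
      finally show ?thesis .
    qed
    then show "sqrt (integral (K \<times> {a<..<b}) (\<lambda>(x, s). (r x s)\<^sup>2))
             \<le> zeta * sqrt (integral (K \<times> {a<..<b}) (\<lambda>(x, s). (w x s)\<^sup>2))"
      by (simp add: S_def)
  qed
  have p1': "\<forall>K\<in>Th. sqrt (integral (K \<times> {a<..<b}) (\<lambda>(x, s). (r x s)\<^sup>2))
             \<le> (1 / (4 * (2 * real q + 1))) * sqrt (integral (K \<times> {a<..<b}) (\<lambda>(x, s). (w x s)\<^sup>2))"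
    using p1 by (simp only: zeta_def)
  have Lim_eq: "Lim (at_right a) (r x) = poly (RR x) a" for x
  proof (rule tendsto_Lim[OF trivial_limit_at_right_real])
    have "isCont (poly (RR x)) a" by simp
    then have "(poly (RR x) \<longlongrightarrow> poly (RR x) a) (at a)" by (simp add: isCont_def)
    then have lim: "(poly (RR x) \<longlongrightarrow> poly (RR x) a) (at_right a)"
      by (rule tendsto_within_subset) simp
    have ev: "eventually (\<lambda>s. poly (RR x) s = r x s) (at_right a)"
      by (rule eventually_at_rightI[OF _ ab]) (simp add: r_eq)
    show "(r x \<longlongrightarrow> poly (RR x) a) (at_right a)"
      using tendsto_cong[OF ev] lim by blast
  qed
  have sqCc: "sqrt Cc = 1 / (4 * sqrt (2 * real q + 1) * sqrt tau)"
    unfolding Cc_def using tau by (simp add: real_sqrt_mult)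
  have p2: "sqrt (integral \<Omega> (\<lambda>x. (Lim (at_right a) (r x))\<^sup>2))
      \<le> sqrt Cc * sqrt (integral (\<Omega> \<times> {a<..<b}) (\<lambda>(x, s). (w x s)\<^sup>2))"
  proof -
    have Ob: "\<Omega> \<in> sets borel" using mesh'(1) by (rule borel_open)
    have Vc: "continuous_on (closure \<Omega>) (V j)" if "j < q" for j
      using V[OF that, unfolded Vh_def mem_Collect_eq] by blast
    have Cc0: "0 \<le> Cc" by (simp add: Cc_def)
    define hO where "hO z = Cc * (\<Sum>j<q. indicator \<Omega> (fst z) * V j (fst z) * snd z ^ j)\<^sup>2"
      for z :: "(real^'d) \<times> real"
    have Vm: "(\<lambda>z. indicator \<Omega> (fst z) * V j (fst z)) \<in> borel_measurable borel" if "j < q" for j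
    proof -
      have "(\<lambda>x. indicator \<Omega> x *\<^sub>R V j x) \<in> borel_measurable borel"
        using Ob continuous_on_subset[OF Vc[OF that] closure_subset]
        by (rule borel_measurable_continuous_on_indicator)
      then have m: "(\<lambda>x. indicator \<Omega> x * V j x) \<in> borel_measurable borel" by simp
      have f: "fst \<in> borel_measurable borel"
        by (intro borel_measurable_continuous_onI continuous_intros)
      show ?thesis using measurable_compose[OF f m] by simp
    qed
    have sm: "(\<lambda>z. \<Sum>j<q. indicator \<Omega> (fst z) * V j (fst z) * snd z ^ j) \<in> borel_measurable borel"
    proof (rule borel_measurable_sum)
      fix j assume "j \<in> {..<q}"
      then have "j < q" by simp
      have "(\<lambda>z. snd z ^ j :: real) \<in> borel_measurable borel"
        by (intro borel_measurable_continuous_onI continuous_intros)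
      then show "(\<lambda>z. indicator \<Omega> (fst z) * V j (fst z) * snd z ^ j) \<in> borel_measurable borel"
        by (rule borel_measurable_times[OF Vm[OF \<open>j < q\<close>]])
    qed
    have hOm: "hO \<in> borel_measurable borel"
      unfolding hO_def using sm by measurable
    have hOpos: "0 \<le> hO z" for z using Cc0 by (simp add: hO_def)
    have hO_g: "hO (x, s) = Cc * (poly (g x) s)\<^sup>2" if "x \<in> \<Omega>" for x s
      using that by (simp add: hO_def g_poly)
    have hOs: "continuous_on {a..b} (\<lambda>s. hO (x, s))" if "x \<in> \<Omega>" for x
      using that by (simp add: hO_g) (intro continuous_intros)
    have hO_w: "hO (x, s) = Cc * (w x s)\<^sup>2" if "x \<in> \<Omega>" "s \<in> {a<..<b}" for x s
      using that by (simp add: hO_def wV)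
    have Wnn: "0 \<le> integral (\<Omega> \<times> {a<..<b}) (\<lambda>(x, s). (w x s)\<^sup>2)" by (rule int_nonneg) auto
    have wint: "(\<lambda>(x, s). Cc * (w x s)\<^sup>2) integrable_on (\<Omega> \<times> {a<..<b})"
    proof (rule integrable_from_compact[where C = "closure \<Omega> \<times> {a..b}"
          and psi = "\<lambda>z. Cc * (\<Sum>j<q. V j (fst z) * snd z ^ j)\<^sup>2"])
      show "compact (closure \<Omega> \<times> {a..b})" using mesh'(2) by (intro compact_Times) auto
      have "continuous_on (closure \<Omega> \<times> {a..b}) (\<lambda>z. V j (fst z))" if "j < q" for j
        by (rule continuous_on_compose2[OF Vc[OF that]]) (auto intro: continuous_intros)
      then show "continuous_on (closure \<Omega> \<times> {a..b}) (\<lambda>z. Cc * (\<Sum>j<q. V j (fst z) * snd z ^ j)\<^sup>2)"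
        by (intro continuous_intros) auto
      show "\<Omega> \<times> {a<..<b} \<subseteq> closure \<Omega> \<times> {a..b}" using closure_subset by auto
      show "\<Omega> \<times> {a<..<b} \<in> sets borel" using Ob Ib by (rule borel_Times)
      show "(case z of (x, s) \<Rightarrow> Cc * (w x s)\<^sup>2) = Cc * (\<Sum>j<q. V j (fst z) * snd z ^ j)\<^sup>2"
        if "z \<in> \<Omega> \<times> {a<..<b}" for z
        using that by (auto simp: wV)
    qed
    show ?thesis
    proof (cases "(\<lambda>x. (Lim (at_right a) (r x))\<^sup>2) integrable_on \<Omega>")
      case False
      then show ?thesis using Wnn Cc0 by (simp add: not_integrable_integral)
    next
      case True
      have "ennreal (integral \<Omega> (\<lambda>x. (Lim (at_right a) (r x))\<^sup>2))
          = (\<integral>\<^sup>+x. ennreal ((Lim (at_right a) (r x))\<^sup>2) * indicator \<Omega> x \<partial>lborel)"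
        using True by (intro nn_integral_has_integral_lebesgue'[symmetric]) auto
      also have "\<dots> \<le> (\<integral>\<^sup>+x. indicator \<Omega> x * ennreal (integral {a<..<b} (\<lambda>s. hO (x, s))) \<partial>lborel)"
      proof (rule nn_integral_mono)
        fix x :: "real^'d"
        show "ennreal ((Lim (at_right a) (r x))\<^sup>2) * indicator \<Omega> x
            \<le> indicator \<Omega> x * ennreal (integral {a<..<b} (\<lambda>s. hO (x, s)))"
        proof (cases "x \<in> \<Omega>")
          case False then show ?thesis by simp
        next
          case True
          have ep: "hO (x, s) = poly (smult Cc (g x * g x)) s" for s
            using hO_g[OF True, of s] by (simp add: power2_eq_square)
          have e: "integral {a<..<b} (\<lambda>s. hO (x, s)) = Cc * I.Ip (g x * g x)"
            unfolding I.Ip_smult[symmetric] by (rule I.integral_Ioo_poly) (rule ep)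
          have "(Lim (at_right a) (r x))\<^sup>2 \<le> Cc * I.Ip (g x * g x)"
            unfolding Lim_eq by (rule c2)
          then show ?thesis unfolding e using True by (simp add: ennreal_leI)
        qed
      qed
      also have "\<dots> = (\<integral>\<^sup>+z. ennreal (hO z) * indicator (\<Omega> \<times> {a<..<b}) z \<partial>lborel)"
        using hOs by (intro tonelli_slices[symmetric, OF Ob hOm] hOpos) auto
      also have "\<dots> = (\<integral>\<^sup>+z. ennreal ((\<lambda>(x, s). Cc * (w x s)\<^sup>2) z) * indicator (\<Omega> \<times> {a<..<b}) z \<partial>lborel)"
        by (intro nn_integral_cong ind_cong) (simp add: hO_w)
      also have "\<dots> = ennreal (integral (\<Omega> \<times> {a<..<b}) (\<lambda>(x, s). Cc * (w x s)\<^sup>2))"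
        using wint Cc0 by (intro nn_integral_has_integral_lebesgue') auto
      finally have le: "integral \<Omega> (\<lambda>x. (Lim (at_right a) (r x))\<^sup>2) \<le> integral (\<Omega> \<times> {a<..<b}) (\<lambda>(x, s). Cc * (w x s)\<^sup>2)"
        using Wnn Cc0 by (subst (asm) ennreal_le_iff) (auto intro: int_nonneg)
      have "(\<lambda>(x, s). Cc * (w x s)\<^sup>2) = (\<lambda>z. Cc * (\<lambda>(x, s). (w x s)\<^sup>2) z)" by auto
      then have "integral (\<Omega> \<times> {a<..<b}) (\<lambda>(x, s). Cc * (w x s)\<^sup>2) = Cc * integral (\<Omega> \<times> {a<..<b}) (\<lambda>(x, s). (w x s)\<^sup>2)" by simp
      with le have "sqrt (integral \<Omega> (\<lambda>x. (Lim (at_right a) (r x))\<^sup>2)) \<le> sqrt (Cc * integral (\<Omega> \<times> {a<..<b}) (\<lambda>(x, s). (w x s)\<^sup>2))"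
        by simp
      also have "\<dots> = sqrt Cc * sqrt (integral (\<Omega> \<times> {a<..<b}) (\<lambda>(x, s). (w x s)\<^sup>2))" by (simp add: real_sqrt_mult)
      finally show ?thesis .
    qed
  qed
  have p2': "sqrt (integral \<Omega> (\<lambda>x. (Lim (at_right a) (r x))\<^sup>2))
      \<le> 1 / (4 * sqrt (2 * real q + 1) * sqrt (b - a)) * sqrt (integral (\<Omega> \<times> {a<..<b}) (\<lambda>(x, s). (w x s)\<^sup>2))"
    using p2 unfolding sqCc tau_def .
  have gen3: "sqrt ((1 / (4 * u)) / v) / 2 = 1 / (4 * sqrt u * sqrt v)" if "u > 0" "v > 0" for u v :: real
  proof -
    have s4: "sqrt 4 = (2::real)" by (rule real_sqrt_unique) auto
    show ?thesis using that by (simp add: real_sqrt_divide real_sqrt_mult s4)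
  qed
  have p3': "1 / (4 * sqrt (2 * real q + 1) * sqrt (b - a)) * sqrt (integral (\<Omega> \<times> {a<..<b}) (\<lambda>(x, s). (w x s)\<^sup>2))
      = sqrt ((1 / (4 * (2 * real q + 1))) / (b - a)) / 2 * sqrt (integral (\<Omega> \<times> {a<..<b}) (\<lambda>(x, s). (w x s)\<^sup>2))"
    using gen3[of "2 * real q + 1" "b - a"] ab by simp
  show ?thesis
    unfolding a_def[symmetric] b_def[symmetric] using p1' p2' p3' by blast
qed

end
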